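(* For every $n\ge 3$ there does not exist any $\mathrm{SL}_2$-tiling of $\mathbb{Z}^n$.
   Context: Write $\mathbf{e}_k$ for the $k$-th standard unit vector of $\mathbb{Z}^n$. An $\mathrm{SL}_2$-tiling of $\mathbb{Z}^n$ is an array $(a_{\mathbf{i}})_{\mathbf{i}\in\mathbb{Z}^n}$ with all $a_{\mathbf{i}}\in\mathbb{Z}_{>0}$ such that for all $\mathbf{i}\in\mathbb{Z}^n$ and all $k\ne\ell$: $a_{\mathbf{i}+\mathbf{e}_\ell}a_{\mathbf{i}+\mathbf{e}_k}-a_{\mathbf{i}}a_{\mathbf{i}+\mathbf{e}_k+\mathbf{e}_\ell}=1$. *)

theory Defs
  imports Main
begin

text \<open>Points of Z^n are modelled as functions nat => int vanishing outside {0..<n}.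
  The standard unit vectors e_k are indexed by k < n (0-based).\<close>

definition lattice :: "nat \<Rightarrow> (nat \<Rightarrow> int) set" where
  "lattice n = {i. \<forall>k\<ge>n. i k = 0}"

definition unitvec :: "nat \<Rightarrow> nat \<Rightarrow> int" where
  "unitvec k = (\<lambda>j. if j = k then 1 else 0)"

definition vadd :: "(nat \<Rightarrow> int) \<Rightarrow> (nat \<Rightarrow> int) \<Rightarrow> nat \<Rightarrow> int" where
  "vadd i j = (\<lambda>m. i m + j m)"

definition SL2_tiling :: "nat \<Rightarrow> ((nat \<Rightarrow> int) \<Rightarrow> int) \<Rightarrow> bool" where
  "SL2_tiling n a \<longleftrightarrow>
     (\<forall>i\<in>lattice n. a i > 0) \<and>
     (\<forall>i\<in>lattice n. \<forall>k<n. \<forall>l<n. k \<noteq> l \<longrightarrow>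
        a (vadd i (unitvec l)) * a (vadd i (unitvec k)) - a i * a (vadd (vadd i (unitvec k)) (unitvec l)) = 1)"

end

theory Submission
  imports Defs
begin

lemma vadd_comm2: "vadd (vadd i x) y = vadd (vadd i y) x"
  by (auto simp: vadd_def)

lemma lattice_step: "i \<in> lattice n \<Longrightarrow> k < n \<Longrightarrow> vadd i (unitvec k) \<in> lattice n"
  by (auto simp: lattice_def vadd_def unitvec_def)

lemma cube_alg:
  fixes a b1 b2 b3 c12 c13 c23 d :: int
  assumes pos: "a > 0" "b1 > 0" "b2 > 0"
    and e12: "b1*b2 - a*c12 = 1" and e13: "b1*b3 - a*c13 = 1" and e23: "b2*b3 - a*c23 = 1"
    and f1: "c12*c13 - b1*d = 1" and f2: "c12*c23 - b2*d = 1"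
  shows "b1 = b2"
proof -
  have A: "a*c12 = b1*b2 - 1" "a*c13 = b1*b3 - 1" "a*c23 = b2*b3 - 1" using e12 e13 e23 by auto
  have B1: "a*a*(b1*d) = (b1*b2-1)*(b1*b3-1) - a*a"
  proof -
    have "a*a*(b1*d) = a*a*(c12*c13 - 1)" using f1 by (simp add: algebra_simps)
    also have "\<dots> = (a*c12)*(a*c13) - a*a" by (simp add: algebra_simps)
    finally show ?thesis using A by simp
  qed
  have B2: "a*a*(b2*d) = (b1*b2-1)*(b2*b3-1) - a*a"
  proof -
    have "a*a*(b2*d) = a*a*(c12*c23 - 1)" using f2 by (simp add: algebra_simps)
    also have "\<dots> = (a*c12)*(a*c23) - a*a" by (simp add: algebra_simps)
    finally show ?thesis using A by simp
  qed
  have "b2*(a*a*(b1*d)) = b1*(a*a*(b2*d))" by (simp add: algebra_simps)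
  hence "b2*((b1*b2-1)*(b1*b3-1) - a*a) = b1*((b1*b2-1)*(b2*b3-1) - a*a)"
    using B1 B2 by simp
  hence "(b1-b2)*(b1*b2 - 1 + a*a) = 0" by (simp add: algebra_simps)
  moreover have "b1*b2 - 1 + a*a > 0" using pos
    by (smt (verit) mult_pos_pos)
  ultimately show ?thesis by simp
qed

lemma cube:
  assumes T: "SL2_tiling n a" and i: "i \<in> lattice n"
    and k: "k < n" and l: "l < n" and m: "m < n" and d: "k \<noteq> l" "k \<noteq> m" "l \<noteq> m"
  shows "a (vadd i (unitvec k)) = a (vadd i (unitvec l))"
proof -
  have P: "\<And>j. j \<in> lattice n \<Longrightarrow> a j > 0" and
       R: "\<And>j p q. j \<in> lattice n \<Longrightarrow> p < n \<Longrightarrow> q < n \<Longrightarrow> p \<noteq> q \<Longrightarrow>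
        a (vadd j (unitvec q)) * a (vadd j (unitvec p)) - a j * a (vadd (vadd j (unitvec p)) (unitvec q)) = 1"
    using T unfolding SL2_tiling_def by auto
  define E where "E = unitvec"
  have ik: "vadd i (E k) \<in> lattice n" and il: "vadd i (E l) \<in> lattice n"
    using lattice_step i k l by (auto simp: E_def)
  have e12: "a (vadd i (E k)) * a (vadd i (E l)) - a i * a (vadd (vadd i (E k)) (E l)) = 1"
    using R[OF i l k] d by (simp add: E_def vadd_comm2 mult.commute)
  have e13: "a (vadd i (E k)) * a (vadd i (E m)) - a i * a (vadd (vadd i (E k)) (E m)) = 1"
    using R[OF i m k] d by (simp add: E_def vadd_comm2 mult.commute)
  have e23: "a (vadd i (E l)) * a (vadd i (E m)) - a i * a (vadd (vadd i (E l)) (E m)) = 1"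
    using R[OF i m l] d by (simp add: E_def vadd_comm2 mult.commute)
  have f1: "a (vadd (vadd i (E k)) (E l)) * a (vadd (vadd i (E k)) (E m))
     - a (vadd i (E k)) * a (vadd (vadd (vadd i (E k)) (E l)) (E m)) = 1"
    using R[OF ik m l] d by (simp add: E_def vadd_comm2 mult.commute)
  have f2: "a (vadd (vadd i (E k)) (E l)) * a (vadd (vadd i (E l)) (E m))
     - a (vadd i (E l)) * a (vadd (vadd (vadd i (E k)) (E l)) (E m)) = 1"
    using R[OF il k m] d by (simp add: E_def vadd_comm2 mult.commute)
  have pos: "a i > 0" "a (vadd i (E k)) > 0" "a (vadd i (E l)) > 0"
    using P i ik il by auto
  show ?thesis using cube_alg[OF pos e12 e13 e23 f1 f2] by (simp add: E_def)
qed

lemma seq_step: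
  fixes h :: "int \<Rightarrow> int"
  assumes pos: "\<And>t. h t > 0" and R: "\<And>t. h (t+1) * h (t+1) - h t * h (t+2) = 1"
    and le: "h (s+1) \<le> h s"
  shows "h (s+2) < h (s+1)"
proof -
  have "h s * h (s+2) < h s * h (s+1)"
  proof -
    have "h s * h (s+2) = h (s+1) * h (s+1) - 1" using R[of s] by simp
    also have "\<dots> < h (s+1) * h (s+1)" by simp
    also have "\<dots> \<le> h s * h (s+1)" using le pos[of "s+1"] by (simp add: mult_right_mono)
    finally show ?thesis .
  qed
  thus ?thesis using pos[of s] by simp
qed

lemma seq_down:
  fixes h :: "int \<Rightarrow> int"
  assumes pos: "\<And>t. h t > 0" and R: "\<And>t. h (t+1) * h (t+1) - h t * h (t+2) = 1"
    and le: "h 1 \<le> h 0"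
  shows False
proof -
  have "\<forall>m::nat. h (int m + 1) \<le> h (int m) \<and> h (int m + 1) \<le> h 0 - int m"
  proof
    fix m :: nat show "h (int m + 1) \<le> h (int m) \<and> h (int m + 1) \<le> h 0 - int m"
    proof (induction m)
      case 0 then show ?case using le by simp
    next
      case (Suc m)
      have a1: "h (int m + 2) < h (int m + 1)" using seq_step[OF pos R] Suc by blast
      have e: "int (Suc m) + 1 = int m + 2" "int (Suc m) = int m + 1" by auto
      show ?case unfolding e(1) unfolding e(2) using Suc a1 by linarith
    qed
  qed
  hence "h (int (nat (h 0)) + 1) \<le> h 0 - int (nat (h 0))" by blast
  moreover have "h 0 \<ge> 0" using pos[of 0] by simp
  ultimately have "h (int (nat (h 0)) + 1) \<le> 0" by simp
  with pos show False by (meson not_less)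
qed

lemma seq_false:
  fixes h :: "int \<Rightarrow> int"
  assumes pos: "\<And>t. h t > 0" and R: "\<And>t. h (t+1) * h (t+1) - h t * h (t+2) = 1"
  shows False
proof (cases "h 1 \<le> h 0")
  case True then show ?thesis using seq_down[OF pos R] by blast
next
  case False
  define g where "g t = h (1 - t)" for t
  have gp: "\<And>t. g t > 0" using pos by (simp add: g_def)
  have gR: "\<And>t. g (t+1) * g (t+1) - g t * g (t+2) = 1"
  proof -
    fix t
    have r: "h (-1-t+1) * h (-1-t+1) - h (-1-t) * h (-1-t+2) = 1" by (rule R)
    have q1: "g (t+1) = h (-1-t+1)" unfolding g_def by (rule arg_cong[where f=h]) simp
    have q2: "g t = h (-1-t+2)" unfolding g_def by (rule arg_cong[where f=h]) simp
    have q3: "g (t+2) = h (-1-t)" unfolding g_def by (rule arg_cong[where f=h]) simp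
    show "g (t+1) * g (t+1) - g t * g (t+2) = 1" unfolding q1 q2 q3 using r by (simp only: mult.commute)
  qed
  have "g 1 \<le> g 0" using False by (simp add: g_def)
  then show ?thesis using seq_down[OF gp gR] by blast
qed

theorem proposition2p4:
  fixes n :: nat
  assumes "n \<ge> 3"
  shows "\<not> (\<exists>a. SL2_tiling n a)"
proof
  assume "\<exists>a. SL2_tiling n a"
  then obtain a where T: "SL2_tiling n a" by blast
  have P: "\<And>j. j \<in> lattice n \<Longrightarrow> a j > 0" and
       R: "\<And>j p q. j \<in> lattice n \<Longrightarrow> p < n \<Longrightarrow> q < n \<Longrightarrow> p \<noteq> q \<Longrightarrow>
        a (vadd j (unitvec q)) * a (vadd j (unitvec p)) - a j * a (vadd (vadd j (unitvec p)) (unitvec q)) = 1"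
    using T unfolding SL2_tiling_def by auto
  define v :: "int \<Rightarrow> nat \<Rightarrow> int" where "v t = (\<lambda>m. if m = 0 then t else 0)" for t
  define h where "h t = a (v t)" for t
  have vl: "v t \<in> lattice n" for t using assms by (auto simp: lattice_def v_def)
  have vs: "vadd (v t) (unitvec 0) = v (t+1)" for t
    by (auto simp: vadd_def unitvec_def v_def)
  have C: "a (vadd (v t) (unitvec 1)) = h (t+1)" for t
    using cube[OF T vl, of 0 1 2 t] assms vs by (simp add: h_def)
  have C2: "a (vadd (vadd (v t) (unitvec 0)) (unitvec 1)) = h (t+2)" for t
    using C[of "t+1"] vs by (simp add: add.assoc)
  have hp: "h t > 0" for t using P vl by (simp add: h_def)
  have hR: "h (t+1) * h (t+1) - h t * h (t+2) = 1" for t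
    using R[OF vl, of 0 1 t] assms C[of t] C2[of t] vs by (simp add: h_def)
  show False using seq_false[OF hp hR] .
qed

end
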